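(* Let $\pi$ be a permutation-invariant probability density on $\mathbb{X}^n$ and $q$ a probability density on $\mathbb{X}$. For every $x\in\mathbb{X}^n$, $A^{\mathrm{SOMA}}(x)\ge A^{\mathrm{RAN}}(x)$, where $$A^{\mathrm{SOMA}}(x)=\int_{\mathbb{X}}q(y)\sum_{i=1}^n\frac{w_i(y,x)}{W(y,x)}\alpha_i^{\mathrm{SOMA}}(y,x)\,dy,\qquad A^{\mathrm{RAN}}(x)=\int_{\mathbb{X}}q(y)\sum_{i=1}^n\frac1n\alpha_i^{\mathrm{IMwG}}(y,x)\,dy.$$
   Context: Permutation invariance: $\pi(x_{\sigma(1)},\dots,x_{\sigma(n)})=\pi(x)$ for all permutations $\sigma$. $[x_{-i},y]$ is $x$ with its $i$-th component replaced by $y$. Weights: $w_i(y,x)=\pi([x_{-i},y])/\big(q(y)\prod_{j\ne i}q(x_j)\big)$ ($1\le i\le n$), $w_0(y,x)=\pi(x)/\prod_j q(x_j)$, $W=\sum_{i=1}^n w_i$ (well-defined, positive). $\alpha_i^{\mathrm{SOMA}}(y,x)=\min\{1,W/(W+w_0-w_i)\}$, $\alpha_i^{\mathrm{IMwG}}(y,x)=\min\{1,w_i/w_0\}$. $A^{\mathrm{SOMA}}(x)$ and $A^{\mathrm{RAN}}(x)$ are the probabilities of accepting a move from $x$ under the SOMA sampler and the random-scan independent-Metropolis-within-Gibbs sampler, respectively. *)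

theory Defs
  imports "HOL-Probability.Probability" "HOL-Combinatorics.Permutations"
begin

text \<open>Points of X^n are represented as extensional functions on the index set {..<n}
  (elements of the space of the product measure PiM {..<n} (\<lambda>_. M)).
  Indices are 0,...,n-1 instead of 1,...,n.\<close>

text \<open>Metropolis-Hastings style ratio min{1, a/b}, with the convention a/0 = +infinity,
  i.e. the ratio equals 1 when b = 0.\<close>
definition mh_min :: "real \<Rightarrow> real \<Rightarrow> real" where
  "mh_min a b = (if b = 0 then 1 else min 1 (a / b))"

definition perm_invariant :: "nat \<Rightarrow> 'a measure \<Rightarrow> ((nat \<Rightarrow> 'a) \<Rightarrow> real) \<Rightarrow> bool" where
  "perm_invariant n M \<pi> \<longleftrightarrow>
     (\<forall>\<sigma> x. \<sigma> permutes {..<n} \<longrightarrow> x \<in> space (PiM {..<n} (\<lambda>_. M)) \<longrightarrow>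
        \<pi> (\<lambda>i\<in>{..<n}. x (\<sigma> i)) = \<pi> x)"

definition wt :: "nat \<Rightarrow> ((nat \<Rightarrow> 'a) \<Rightarrow> real) \<Rightarrow> ('a \<Rightarrow> real) \<Rightarrow> nat \<Rightarrow> 'a \<Rightarrow> (nat \<Rightarrow> 'a) \<Rightarrow> real" where
  "wt n \<pi> q i y x = \<pi> (x(i := y)) / (q y * (\<Prod>j\<in>{..<n} - {i}. q (x j)))"

definition wt0 :: "nat \<Rightarrow> ((nat \<Rightarrow> 'a) \<Rightarrow> real) \<Rightarrow> ('a \<Rightarrow> real) \<Rightarrow> (nat \<Rightarrow> 'a) \<Rightarrow> real" where
  "wt0 n \<pi> q x = \<pi> x / (\<Prod>j\<in>{..<n}. q (x j))"

definition Wsum :: "nat \<Rightarrow> ((nat \<Rightarrow> 'a) \<Rightarrow> real) \<Rightarrow> ('a \<Rightarrow> real) \<Rightarrow> 'a \<Rightarrow> (nat \<Rightarrow> 'a) \<Rightarrow> real" where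
  "Wsum n \<pi> q y x = (\<Sum>i\<in>{..<n}. wt n \<pi> q i y x)"

definition alpha_SOMA :: "nat \<Rightarrow> ((nat \<Rightarrow> 'a) \<Rightarrow> real) \<Rightarrow> ('a \<Rightarrow> real) \<Rightarrow> nat \<Rightarrow> 'a \<Rightarrow> (nat \<Rightarrow> 'a) \<Rightarrow> real" where
  "alpha_SOMA n \<pi> q i y x =
     mh_min (Wsum n \<pi> q y x) (Wsum n \<pi> q y x + wt0 n \<pi> q x - wt n \<pi> q i y x)"

definition alpha_IMwG :: "nat \<Rightarrow> ((nat \<Rightarrow> 'a) \<Rightarrow> real) \<Rightarrow> ('a \<Rightarrow> real) \<Rightarrow> nat \<Rightarrow> 'a \<Rightarrow> (nat \<Rightarrow> 'a) \<Rightarrow> real" where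
  "alpha_IMwG n \<pi> q i y x = mh_min (wt n \<pi> q i y x) (wt0 n \<pi> q x)"

definition A_SOMA :: "nat \<Rightarrow> 'a measure \<Rightarrow> ((nat \<Rightarrow> 'a) \<Rightarrow> real) \<Rightarrow> ('a \<Rightarrow> real) \<Rightarrow> (nat \<Rightarrow> 'a) \<Rightarrow> real" where
  "A_SOMA n M \<pi> q x = (\<integral>y. q y * (\<Sum>i\<in>{..<n}.
       wt n \<pi> q i y x / Wsum n \<pi> q y x * alpha_SOMA n \<pi> q i y x) \<partial>M)"

definition A_RAN :: "nat \<Rightarrow> 'a measure \<Rightarrow> ((nat \<Rightarrow> 'a) \<Rightarrow> real) \<Rightarrow> ('a \<Rightarrow> real) \<Rightarrow> (nat \<Rightarrow> 'a) \<Rightarrow> real" where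
  "A_RAN n M \<pi> q x = (\<integral>y. q y * (\<Sum>i\<in>{..<n}. 1 / real n * alpha_IMwG n \<pi> q i y x) \<partial>M)"

end

theory Submission
  imports Defs
begin

lemma cheb:
  fixes r m :: "nat \<Rightarrow> real" and I :: "nat set"
  assumes "finite I" and sim: "\<And>i j. i\<in>I \<Longrightarrow> j\<in>I \<Longrightarrow> (r i - r j) * (m i - m j) \<ge> 0"
  shows "(\<Sum>i\<in>I. r i) * (\<Sum>i\<in>I. m i) \<le> real (card I) * (\<Sum>i\<in>I. r i * m i)"
proof -
  define A where "A = (\<Sum>i\<in>I. r i * m i)"
  define R where "R = (\<Sum>i\<in>I. r i)"
  define Mm where "Mm = (\<Sum>i\<in>I. m i)"
  define c where "c = real (card I)"
  have inner: "(\<Sum>j\<in>I. (r i - r j) * (m i - m j)) = c * (r i * m i) + A - r i * Mm - R * m i" for i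
  proof -
    have "(\<Sum>j\<in>I. (r i - r j) * (m i - m j)) =
        (\<Sum>j\<in>I. r i * m i + r j * m j - r i * m j - m i * r j)"
      by (intro sum.cong refl) (simp add: algebra_simps)
    also have "\<dots> = (\<Sum>j\<in>I. r i * m i) + (\<Sum>j\<in>I. r j * m j) - (\<Sum>j\<in>I. r i * m j) - (\<Sum>j\<in>I. m i * r j)"
      by (simp only: sum_subtractf sum.distrib)
    also have "\<dots> = c * (r i * m i) + A - r i * Mm - m i * R"
      by (simp only: sum_constant A_def Mm_def R_def c_def sum_distrib_left)
    finally show ?thesis by (simp only: mult.commute[of "m i" R])
  qed
  have "0 \<le> (\<Sum>i\<in>I. \<Sum>j\<in>I. (r i - r j) * (m i - m j))"
    by (intro sum_nonneg) (auto intro: sim)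
  also have "\<dots> = (\<Sum>i\<in>I. c * (r i * m i) + A - r i * Mm - R * m i)"
    by (simp only: inner)
  also have "\<dots> = (\<Sum>i\<in>I. c * (r i * m i)) + (\<Sum>i\<in>I. A) - (\<Sum>i\<in>I. r i * Mm) - (\<Sum>i\<in>I. R * m i)"
    by (simp only: sum_subtractf sum.distrib)
  also have "\<dots> = c * A + c * A - R * Mm - R * Mm"
  proof -
    have s1: "(\<Sum>i\<in>I. c * (r i * m i)) = c * A" by (simp add: A_def sum_distrib_left)
    have s2: "(\<Sum>i\<in>I. A) = c * A" by (simp add: c_def)
    have s3: "(\<Sum>i\<in>I. r i * Mm) = R * Mm" by (simp add: R_def sum_distrib_right)
    have s4: "(\<Sum>i\<in>I. R * m i) = R * Mm" by (simp add: Mm_def sum_distrib_left)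
    show ?thesis by (simp only: s1 s2 s3 s4)
  qed
  finally have "R * Mm \<le> c * A" by (simp add: mult.commute)
  thus ?thesis unfolding R_def Mm_def c_def A_def .
qed

lemma pointwise:
  fixes w :: "nat \<Rightarrow> real" and w0 :: real and n :: nat
  assumes n: "n \<ge> 1" and wnn: "\<And>i. i < n \<Longrightarrow> w i \<ge> 0" and w0: "w0 \<ge> 0"
    and Wp: "(\<Sum>i<n. w i) > 0"
  shows "(\<Sum>i<n. 1 / real n * mh_min (w i) w0) \<le>
         (\<Sum>i<n. w i / (\<Sum>i<n. w i) * mh_min (\<Sum>i<n. w i) ((\<Sum>i<n. w i) + w0 - w i))"
proof -
  define W where "W = (\<Sum>i<n. w i)"
  have wle: "w i \<le> W" if "i < n" for i
    unfolding W_def using that wnn by (intro member_le_sum) auto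
  have tm: "w i / W * mh_min W (W + w0 - w i) = w i / max W (W + w0 - w i)" if "i < n" for i
  proof -
    have "W > 0" using Wp W_def by simp
    moreover have "W + w0 - w i \<ge> 0" using wle[OF that] w0 by simp
    ultimately show ?thesis using wnn[OF that] unfolding mh_min_def
      by (auto simp: min_def max_def field_simps)
  qed
  show ?thesis
  proof (cases "w0 = 0")
    case True
    have "(\<Sum>i<n. w i / W * mh_min W (W + w0 - w i)) = (\<Sum>i<n. w i / W)"
      proof (intro sum.cong refl)
      fix i assume i: "i \<in> {..<n}"
      hence "w i \<ge> 0" using wnn by simp
      thus "w i / W * mh_min W (W + w0 - w i) = w i / W"
        using tm[of i] i True by (cases "w i = 0") (auto simp: max_def)
    qed
    also have "\<dots> = 1" using Wp W_def by (simp add: sum_divide_distrib[symmetric])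
    finally show ?thesis using True n by (simp add: mh_min_def W_def)
  next
    case False
    hence w0p: "w0 > 0" using w0 by simp
    define m where "m i = max (w i) w0" for i
    define r where "r i = w i / m i" for i
    have mp: "m i > 0" for i using w0p by (simp add: m_def)
    define S where "S = (\<Sum>i<n. m i)"
    have Sp: "S > 0" using mp n unfolding S_def by (intro sum_pos) (auto simp: lessThan_empty_iff)
    have rmono: "r a \<le> r b" if ab: "w a \<le> w b" for a b
    proof (cases "w b \<le> w0")
      case True
      hence "r a = w a / w0" "r b = w b / w0" using ab by (auto simp: r_def m_def max_def)
      thus ?thesis using ab w0p by (simp add: divide_right_mono)
    next
      case False
      hence "r b = 1" using w0p by (auto simp: r_def m_def max_def)
      moreover have "r a \<le> 1" unfolding r_def using mp[of a] by (simp add: m_def)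
      ultimately show ?thesis by simp
    qed
    have rhs: "mh_min (w i) w0 = r i" if "i<n" for i
      using w0p wnn[OF that] unfolding mh_min_def r_def m_def
      by (auto simp: min_def max_def field_simps)
    have "(\<Sum>i<n. 1 / real n * mh_min (w i) w0) = (\<Sum>i<n. r i) / real n"
      using rhs by (simp add: sum_divide_distrib)
    also have "\<dots> \<le> (\<Sum>i<n. r i * m i) / S"
    proof -
      have key: "(\<Sum>i<n. r i) * S \<le> real n * (\<Sum>i<n. r i * m i)"
      proof -
        have "(r i - r j) * (m i - m j) \<ge> 0" if "i<n" "j<n" for i j
        proof (cases "w i \<le> w j")
          case True
          hence "m i \<le> m j" by (simp add: m_def)
          moreover have "r i \<le> r j"
            using rmono[OF True] .
          ultimately have "r i - r j \<le> 0" "m i - m j \<le> 0" by auto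
          thus ?thesis by (rule mult_nonpos_nonpos)
        next
          case False
          hence "m j \<le> m i" by (simp add: m_def)
          moreover have "r j \<le> r i"
            using rmono False by simp
          ultimately have "r i - r j \<ge> 0" "m i - m j \<ge> 0" by auto
          thus ?thesis by (rule mult_nonneg_nonneg)
        qed
        thus ?thesis using cheb[of "{..<n}" r m] by (simp add: S_def)
      qed
      have np: "real n > 0" using n by simp
      have e1: "(\<Sum>i<n. r i) / real n = ((\<Sum>i<n. r i) * S) / (real n * S)"
        using Sp np by simp
      have e2: "(\<Sum>i<n. r i * m i) / S = (real n * (\<Sum>i<n. r i * m i)) / (real n * S)"
        using Sp np by simp
      show ?thesis unfolding e1 e2
        using key Sp np by (intro divide_right_mono) auto
    qed
    also have "\<dots> = (\<Sum>i<n. w i / S)"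
      using mp unfolding r_def sum_divide_distrib[symmetric]
      by (intro arg_cong[where f="\<lambda>t. t / S"] sum.cong refl) (simp add: less_imp_neq[symmetric])
    also have "\<dots> \<le> (\<Sum>i<n. w i / max W (W + w0 - w i))"
    proof (intro sum_mono)
      fix i assume i: "i \<in> {..<n}"
      have "W - w i = (\<Sum>j\<in>{..<n}-{i}. w j)" unfolding W_def
        using i by (simp add: sum_diff1)
      also have "\<dots> \<le> (\<Sum>j\<in>{..<n}-{i}. m j)" by (intro sum_mono) (simp add: m_def)
      also have "\<dots> = S - m i" unfolding S_def using i by (simp add: sum_diff1)
      finally have "max W (W + w0 - w i) \<le> S" unfolding m_def by (auto simp: max_def)
      moreover have "max W (W + w0 - w i) > 0" using Wp W_def by (simp add: max_def)
      ultimately show "w i / S \<le> w i / max W (W + w0 - w i)"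
        using wnn i by (intro divide_left_mono) auto
    qed
    also have "\<dots> = (\<Sum>i<n. w i / W * mh_min W (W + w0 - w i))"
      using tm by (intro sum.cong) auto
    finally show ?thesis unfolding W_def .
  qed
qed
lemma upd_space:
  assumes "x \<in> space (PiM {..<n} (\<lambda>_. M))" "i < n" "y \<in> space M"
  shows "x(i := y) \<in> space (PiM {..<n} (\<lambda>_. M))"
proof -
  have "x(i := y) \<in> PiE (insert i {..<n}) (\<lambda>_. space M)"
    using assms unfolding space_PiM by (intro PiE_fun_upd) auto
  moreover have "insert i {..<n} = {..<n}" using assms(2) by auto
  ultimately show ?thesis unfolding space_PiM by simp
qed

lemma upd_meas:
  assumes "x \<in> space (PiM {..<n} (\<lambda>_. M))" "i < n"
  shows "(\<lambda>y. x(i := y)) \<in> measurable M (PiM {..<n} (\<lambda>_. M))"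
proof -
  have xext: "x \<in> extensional {..<n}" using assms(1) unfolding space_PiM by (simp add: PiE_def)
  have "(\<lambda>y. x(i := y)) = (\<lambda>y. \<lambda>j\<in>{..<n}. if j = i then y else x j)"
  proof (intro ext)
    fix y j
    show "(x(i := y)) j = (\<lambda>j\<in>{..<n}. if j = i then y else x j) j"
    proof (cases "j < n")
      case False
      hence "j \<noteq> i" "x j = undefined" using assms(2) xext by (auto simp: extensional_def)
      thus ?thesis using False by simp
    qed simp
  qed
  moreover have "(\<lambda>y. \<lambda>j\<in>{..<n}. if j = i then y else x j) \<in> measurable M (PiM {..<n} (\<lambda>_. M))"
  proof (intro measurable_restrict)
    fix j assume j: "j \<in> {..<n}"
    show "(\<lambda>y. if j = i then y else x j) \<in> M \<rightarrow>\<^sub>M M"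
    proof (cases "j = i")
      case False
      have "x j \<in> space M" using assms(1) j unfolding space_PiM by (auto dest: PiE_mem)
      thus ?thesis using False by simp
    qed simp
  qed
  ultimately show ?thesis by (simp only:)
qed

lemma mh_min_meas[measurable]:
  assumes [measurable]: "a \<in> borel_measurable M" "b \<in> borel_measurable M"
  shows "(\<lambda>y. mh_min (a y) (b y)) \<in> borel_measurable M"
  unfolding mh_min_def by measurable

lemma mh_min_le1: "mh_min a b \<le> 1"
  by (simp add: mh_min_def)

lemma mh_min_nonneg: "a \<ge> 0 \<Longrightarrow> b \<ge> 0 \<Longrightarrow> mh_min a b \<ge> 0"
  by (simp add: mh_min_def)

theorem theorem4:
  fixes n :: nat and M :: "'a measure"
    and \<pi> :: "(nat \<Rightarrow> 'a) \<Rightarrow> real" and q :: "'a \<Rightarrow> real"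
  assumes n_pos: "n \<ge> 1"
    and pi_meas: "\<pi> \<in> borel_measurable (PiM {..<n} (\<lambda>_. M))"
    and pi_nonneg: "\<forall>x\<in>space (PiM {..<n} (\<lambda>_. M)). \<pi> x \<ge> 0"
    and pi_dens: "(\<integral>\<^sup>+ x. ennreal (\<pi> x) \<partial>(PiM {..<n} (\<lambda>_. M))) = 1"
    and pi_perm: "perm_invariant n M \<pi>"
    and q_meas: "q \<in> borel_measurable M"
    and q_pos: "\<forall>y\<in>space M. q y > 0"
    and q_dens: "(\<integral>\<^sup>+ y. ennreal (q y) \<partial>M) = 1"
    and W_pos: "\<forall>y\<in>space M. \<forall>x\<in>space (PiM {..<n} (\<lambda>_. M)). Wsum n \<pi> q y x > 0"
    and x_in: "x \<in> space (PiM {..<n} (\<lambda>_. M))"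
  shows "A_SOMA n M \<pi> q x \<ge> A_RAN n M \<pi> q x"
proof -
  have xj: "x j \<in> space M" if "j < n" for j
    using x_in that by (auto simp: space_PiM PiE_def)
  have prodpos: "(\<Prod>j\<in>A. q (x j)) > 0" if "A \<subseteq> {..<n}" for A
  proof -
    have "finite A" using that finite_subset by blast
    thus ?thesis using that xj q_pos by (intro prod_pos) auto
  qed
  have wt_nn: "wt n \<pi> q i y x \<ge> 0" if "i < n" "y \<in> space M" for i y
  proof -
    have "\<pi> (x(i := y)) \<ge> 0" using pi_nonneg upd_space[OF x_in that] by blast
    moreover have "q y * (\<Prod>j\<in>{..<n} - {i}. q (x j)) > 0"
      using q_pos that prodpos[of "{..<n} - {i}"] by (intro mult_pos_pos) auto
    ultimately show ?thesis unfolding wt_def by simp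
  qed
  have wt0_nn: "wt0 n \<pi> q x \<ge> 0"
    using pi_nonneg x_in prodpos[of "{..<n}"] unfolding wt0_def by simp
  have wt_meas: "(\<lambda>y. wt n \<pi> q i y x) \<in> borel_measurable M" if "i < n" for i
  proof -
    have [measurable]: "(\<lambda>y. \<pi> (x(i := y))) \<in> borel_measurable M"
      using measurable_comp[OF upd_meas[OF x_in that] pi_meas] by (simp add: comp_def)
    note q_meas[measurable]
    show ?thesis unfolding wt_def by measurable
  qed
  have W_meas: "(\<lambda>y. Wsum n \<pi> q y x) \<in> borel_measurable M"
    unfolding Wsum_def using wt_meas by (intro borel_measurable_sum) auto
  define f where "f y = q y * (\<Sum>i\<in>{..<n}.
       wt n \<pi> q i y x / Wsum n \<pi> q y x * alpha_SOMA n \<pi> q i y x)" for y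
  define g where "g y = q y * (\<Sum>i\<in>{..<n}. 1 / real n * alpha_IMwG n \<pi> q i y x)" for y
  have f_meas: "f \<in> borel_measurable M"
  proof -
    have sm: "(\<lambda>y. \<Sum>i\<in>{..<n}. wt n \<pi> q i y x / Wsum n \<pi> q y x * alpha_SOMA n \<pi> q i y x)
        \<in> borel_measurable M"
    proof (rule borel_measurable_sum)
      fix i assume "i \<in> {..<n}"
      hence [measurable]: "(\<lambda>y. wt n \<pi> q i y x) \<in> borel_measurable M"
        using wt_meas by simp
      note W_meas[measurable]
      show "(\<lambda>y. wt n \<pi> q i y x / Wsum n \<pi> q y x * alpha_SOMA n \<pi> q i y x) \<in> borel_measurable M"
        unfolding alpha_SOMA_def by measurable
    qed
    note sm[measurable] q_meas[measurable]
    show ?thesis unfolding f_def by measurable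
  qed
  have q_int: "integrable M q"
    using q_meas q_pos q_dens by (intro integrableI_nn_integral_finite[where x=1]) (auto intro!: AE_I2 simp: less_imp_le)
  have sum_bounds: "0 \<le> (\<Sum>i\<in>{..<n}. wt n \<pi> q i y x / Wsum n \<pi> q y x * alpha_SOMA n \<pi> q i y x)
     \<and> (\<Sum>i\<in>{..<n}. wt n \<pi> q i y x / Wsum n \<pi> q y x * alpha_SOMA n \<pi> q i y x) \<le> 1"
    if y: "y \<in> space M" for y
  proof -
    have Wp: "Wsum n \<pi> q y x > 0" using W_pos y x_in by blast
    have wnn': "\<And>i. i < n \<Longrightarrow> 0 \<le> wt n \<pi> q i y x" using wt_nn y by blast
    have Wp': "0 < (\<Sum>i<n. wt n \<pi> q i y x)" using Wp unfolding Wsum_def .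
    have wle: "wt n \<pi> q i y x \<le> Wsum n \<pi> q y x" if "i < n" for i
      unfolding Wsum_def using that wt_nn y by (intro member_le_sum) auto
    have a_nn: "alpha_SOMA n \<pi> q i y x \<ge> 0" if "i < n" for i
      unfolding alpha_SOMA_def using Wp wle[OF that] wt0_nn by (intro mh_min_nonneg) auto
    have "(\<Sum>i\<in>{..<n}. wt n \<pi> q i y x / Wsum n \<pi> q y x * alpha_SOMA n \<pi> q i y x)
        \<le> (\<Sum>i\<in>{..<n}. wt n \<pi> q i y x / Wsum n \<pi> q y x)"
    proof (intro sum_mono)
      fix i assume i: "i \<in> {..<n}"
      have "0 \<le> wt n \<pi> q i y x / Wsum n \<pi> q y x" using wt_nn i y Wp by simp
      moreover have "alpha_SOMA n \<pi> q i y x \<le> 1" unfolding alpha_SOMA_def by (rule mh_min_le1)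
      ultimately show "wt n \<pi> q i y x / Wsum n \<pi> q y x * alpha_SOMA n \<pi> q i y x
          \<le> wt n \<pi> q i y x / Wsum n \<pi> q y x"
        using mult_left_mono[of _ 1] by fastforce
    qed
    also have "\<dots> = 1" using Wp by (simp add: sum_divide_distrib[symmetric] Wsum_def)
    finally show ?thesis using wt_nn a_nn y Wp
      by (auto intro!: sum_nonneg mult_nonneg_nonneg)
  qed
  have f_int: "integrable M f"
  proof (rule Bochner_Integration.integrable_bound[OF q_int f_meas])
    show "AE y in M. norm (f y) \<le> norm (q y)"
    proof (intro AE_I2)
      fix y assume y: "y \<in> space M"
      define s where "s = (\<Sum>i\<in>{..<n}. wt n \<pi> q i y x / Wsum n \<pi> q y x * alpha_SOMA n \<pi> q i y x)"
      have s01: "0 \<le> s" "s \<le> 1" using sum_bounds[OF y] unfolding s_def by auto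
      have qy: "q y > 0" using q_pos y by blast
      have "f y = q y * s" unfolding f_def s_def ..
      moreover have "0 \<le> q y * s" using s01 qy by simp
      moreover have "q y * s \<le> q y * 1" using s01 qy by (intro mult_left_mono) auto
      ultimately show "norm (f y) \<le> norm (q y)" using qy by simp
    qed
  qed
  have "(\<integral>y. g y \<partial>M) \<le> (\<integral>y. f y \<partial>M)"
  proof (rule integral_mono'[OF f_int])
    fix y assume y: "y \<in> space M"
    have qy: "q y > 0" using q_pos y by blast
    show "0 \<le> f y" unfolding f_def using sum_bounds[OF y] qy by (intro mult_nonneg_nonneg) auto
    have Wp: "Wsum n \<pi> q y x > 0" using W_pos y x_in by blast
    have wnn': "\<And>i. i < n \<Longrightarrow> 0 \<le> wt n \<pi> q i y x" using wt_nn y by blast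
    have Wp': "0 < (\<Sum>i<n. wt n \<pi> q i y x)" using Wp unfolding Wsum_def .
    have "(\<Sum>i<n. 1 / real n * mh_min (wt n \<pi> q i y x) (wt0 n \<pi> q x)) \<le>
         (\<Sum>i<n. wt n \<pi> q i y x / (\<Sum>i<n. wt n \<pi> q i y x) *
            mh_min (\<Sum>i<n. wt n \<pi> q i y x) ((\<Sum>i<n. wt n \<pi> q i y x) + wt0 n \<pi> q x - wt n \<pi> q i y x))"
      using pointwise[OF n_pos wnn' wt0_nn Wp'] .
    hence "(\<Sum>i\<in>{..<n}. 1 / real n * alpha_IMwG n \<pi> q i y x) \<le>
        (\<Sum>i\<in>{..<n}. wt n \<pi> q i y x / Wsum n \<pi> q y x * alpha_SOMA n \<pi> q i y x)"
      unfolding alpha_IMwG_def alpha_SOMA_def Wsum_def .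
    thus "g y \<le> f y" unfolding f_def g_def by (rule mult_left_mono[OF _ less_imp_le[OF qy]])
  qed
  thus ?thesis unfolding A_SOMA_def A_RAN_def f_def g_def .
qed

end
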